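(* Let $(\mathcal M,X,\bot)$ be a concurrent system, $a$ a letter, and $x$ an $a$-rooted linking execution from some state $\alpha$. Let $\mathcal M^a=\langle\Sigma\setminus\{a\}\rangle$, and fix integers $p,q\ge0$ and a state $\beta$. Then the map $\varphi:\mathcal M_{\beta,\alpha}(p)\times\mathcal M^a_{\alpha\cdot x}(q)\to\mathcal M_\beta$, $\varphi(u,v)=uxv$, is injective.
   Context: A trace monoid $\mathcal M=\mathcal M(\Sigma,I)$ is $\langle\Sigma\mid ab=ba\ ((a,b)\in I)\rangle$, $\Sigma$ finite, $I$ irreflexive symmetric; $|x|$ is length; $D=(\Sigma\times\Sigma)\setminus I$. A concurrent system $(\mathcal M,X,\bot)$: $X$ finite, $\bot\notin X$, right action of $\mathcal M$ on $X\cup\{\bot\}$ with $\bot\cdot x=\bot$. Notation: $\mathcal M_\beta=\{x:\beta\cdot x\ne\bot\}$, $\mathcal M_{\beta,\alpha}(p)=\{u:|u|=p,\ \beta\cdot u=\alpha\}$, $\mathcal M^a_{\gamma}(q)=\{v\in\mathcal M^a:|v|=q,\ \gamma\cdot v\ne\bot\}$. A linking sequence from $\alpha$ is a sequence of letters $a_1,\dots,a_p$ such that for some indices $1\le j_1<\dots<j_q\le p$: $\alpha\cdot(a_1\cdots a_p)\ne\bot$; $(a_{j_k},a_{j_{k+1}})\in D$ for all $k<q$; every letter of $\Sigma$ occurs among $a_{j_1},\dots,a_{j_q}$. It is $a$-rooted if the indices can be chosen with $a_{j_1}=a$. An $a$-rooted linking execution from $\alpha$ is the image in $\mathcal M$ of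 an $a$-rooted linking sequence from $\alpha$. *)

theory Defs
  imports Main
begin

text \<open>Traces of the trace monoid M(Sigma, I) are represented by words (lists) over Sigma,
  modulo the congruence generated by commuting adjacent independent letters.\<close>

inductive trace_step :: "('a \<times> 'a) set \<Rightarrow> 'a list \<Rightarrow> 'a list \<Rightarrow> bool" for I where
  swap: "(a, b) \<in> I \<Longrightarrow> trace_step I (u @ [a, b] @ w) (u @ [b, a] @ w)"

definition trace_eq :: "('a \<times> 'a) set \<Rightarrow> 'a list \<Rightarrow> 'a list \<Rightarrow> bool" where
  "trace_eq I = equivclp (trace_step I)"

definition dep :: "'a set \<Rightarrow> ('a \<times> 'a) set \<Rightarrow> ('a \<times> 'a) set" where
  "dep \<Sigma> I = (\<Sigma> \<times> \<Sigma>) - I"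

text \<open>Action of a word on a state; None plays the role of the sink state bottom.\<close>
fun run :: "('s \<Rightarrow> 'a \<Rightarrow> 's option) \<Rightarrow> 's \<Rightarrow> 'a list \<Rightarrow> 's option" where
  "run act s [] = Some s"
| "run act s (a # w) = (case act s a of None \<Rightarrow> None | Some t \<Rightarrow> run act t w)"

text \<open>A concurrent system (M(Sigma,I), X, bottom): the letter action on X (with bottom as None)
  maps X into X \<union> {bottom}, and independent letters commute, so that it induces a right action
  of the trace monoid.\<close>
definition concurrent_system ::
  "'a set \<Rightarrow> ('a \<times> 'a) set \<Rightarrow> 's set \<Rightarrow> ('s \<Rightarrow> 'a \<Rightarrow> 's option) \<Rightarrow> bool" where
  "concurrent_system \<Sigma> I X act \<longleftrightarrow>
     finite \<Sigma> \<and> I \<subseteq> \<Sigma> \<times> \<Sigma> \<and> irrefl I \<and> sym I \<and> finite X \<and>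
     (\<forall>s\<in>X. \<forall>a\<in>\<Sigma>. act s a = None \<or> (\<exists>t\<in>X. act s a = Some t)) \<and>
     (\<forall>s\<in>X. \<forall>(a, b)\<in>I. run act s [a, b] = run act s [b, a])"

text \<open>The list as (a_1 ... a_p) is a linking sequence from alpha witnessed by the
  strictly increasing (0-based) index list js = [j_1, ..., j_q].\<close>
definition linking_seq_with ::
  "'a set \<Rightarrow> ('a \<times> 'a) set \<Rightarrow> ('s \<Rightarrow> 'a \<Rightarrow> 's option) \<Rightarrow> 's \<Rightarrow> 'a list \<Rightarrow> nat list \<Rightarrow> bool" where
  "linking_seq_with \<Sigma> I act \<alpha> as js \<longleftrightarrow>
     set as \<subseteq> \<Sigma> \<and> run act \<alpha> as \<noteq> None \<and>
     sorted_wrt (<) js \<and> (\<forall>j\<in>set js. j < length as) \<and>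
     (\<forall>k. Suc k < length js \<longrightarrow> (as ! (js ! k), as ! (js ! Suc k)) \<in> dep \<Sigma> I) \<and>
     \<Sigma> \<subseteq> {as ! j | j. j \<in> set js}"

definition rooted_linking_seq ::
  "'a set \<Rightarrow> ('a \<times> 'a) set \<Rightarrow> ('s \<Rightarrow> 'a \<Rightarrow> 's option) \<Rightarrow> 's \<Rightarrow> 'a \<Rightarrow> 'a list \<Rightarrow> bool" where
  "rooted_linking_seq \<Sigma> I act \<alpha> a as \<longleftrightarrow>
     (\<exists>js. linking_seq_with \<Sigma> I act \<alpha> as js \<and> js \<noteq> [] \<and> as ! hd js = a)"

definition rooted_linking_exec ::
  "'a set \<Rightarrow> ('a \<times> 'a) set \<Rightarrow> ('s \<Rightarrow> 'a \<Rightarrow> 's option) \<Rightarrow> 's \<Rightarrow> 'a \<Rightarrow> 'a list \<Rightarrow> bool" where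
  "rooted_linking_exec \<Sigma> I act \<alpha> a x \<longleftrightarrow>
     set x \<subseteq> \<Sigma> \<and> (\<exists>as. trace_eq I x as \<and> rooted_linking_seq \<Sigma> I act \<alpha> a as)"

end

theory Submission
  imports Defs
begin

definition proj :: "'a \<Rightarrow> 'a \<Rightarrow> 'a list \<Rightarrow> 'a list" where
  "proj c d w = filter (\<lambda>e. e = c \<or> e = d) w"

lemma proj_simps[simp]:
  "proj c d [] = []"
  "proj c d (e # w) = (if e = c \<or> e = d then e # proj c d w else proj c d w)"
  "proj c d (w1 @ w2) = proj c d w1 @ proj c d w2"
  by (auto simp: proj_def)

lemma length_proj:
  "length (proj c d w) = count_list w c + (if d = c then 0 else count_list w d)"
  by (induction w) auto

lemma count_proj: "count_list (proj c d w) d = count_list w d"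
  by (induction w) auto

lemma count_proj1: "count_list (proj c d w) c = count_list w c"
  by (induction w) auto

lemma trace_eq_refl[simp]: "trace_eq I w w"
  by (simp add: trace_eq_def)

lemma trace_eq_sym: "trace_eq I w w' \<Longrightarrow> trace_eq I w' w"
  by (simp add: trace_eq_def equivclp_sym)

lemma trace_eq_trans: "trace_eq I w1 w2 \<Longrightarrow> trace_eq I w2 w3 \<Longrightarrow> trace_eq I w1 w3"
  unfolding trace_eq_def by (meson transpE transp_equivclp)

lemma trace_step_eq: "trace_step I w w' \<Longrightarrow> trace_eq I w w'"
  unfolding trace_eq_def equivclp_def by (simp add: r_into_rtranclp symclp_def)

lemma trace_step_cons: "trace_step I w w' \<Longrightarrow> trace_step I (e # w) (e # w')"
proof (induction rule: trace_step.induct)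
  case (swap a b u w)
  then show ?case using trace_step.swap[of a b I "e # u" w] by simp
qed

lemma trace_eq_cons: "trace_eq I w w' \<Longrightarrow> trace_eq I (e # w) (e # w')"
  unfolding trace_eq_def
proof (induction rule: equivclp_induct)
  case base
  then show ?case by simp
next
  case (step y z)
  then show ?case using trace_step_cons
    by (metis (no_types, lifting) equivclp_def equivclp_sym rtranclp.rtrancl_into_rtrancl symclpI)
qed

lemma trace_step_proj:
  assumes "irrefl I" "sym I" "trace_step I w w'" "(c, d) \<notin> I"
  shows "proj c d w = proj c d w'"
  using assms(3)
proof (induction rule: trace_step.induct)
  case (swap a b u w)
  have "\<not> ((a = c \<or> a = d) \<and> (b = c \<or> b = d))"
  proof
    assume h: "(a = c \<or> a = d) \<and> (b = c \<or> b = d)"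
    have "(b, a) \<in> I" using swap assms(2) by (meson symD)
    then show False using h swap assms(1,4) by (auto simp: irrefl_def)
  qed
  then show ?case by auto
qed

lemma trace_eq_proj:
  assumes "irrefl I" "sym I" "trace_eq I w w'" "(c, d) \<notin> I"
  shows "proj c d w = proj c d w'"
  using assms(3) unfolding trace_eq_def
proof (induction rule: equivclp_induct)
  case base
  then show ?case by simp
next
  case (step y z)
  then show ?case using trace_step_proj[OF assms(1,2) _ assms(4)] by metis
qed

lemma move_front:
  assumes "sym I" "\<forall>e\<in>set y. (c, e) \<in> I"
  shows "trace_eq I (y @ c # z) (c # y @ z)"
  using assms(2)
proof (induction y)
  case Nil
  then show ?case by simp
next
  case (Cons e y)
  have 1: "trace_eq I (e # y @ c # z) (e # c # y @ z)"
    using Cons by (simp add: trace_eq_cons)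
  have "(e, c) \<in> I" using Cons assms(1) by (meson list.set_intros(1) symD)
  then have "trace_step I ([] @ [e, c] @ (y @ z)) ([] @ [c, e] @ (y @ z))"
    by (rule trace_step.swap)
  then have "trace_eq I (e # c # y @ z) (c # e # y @ z)" using trace_step_eq by fastforce
  then show ?case using 1 trace_eq_trans by fastforce
qed

lemma proj_eq_trace:
  assumes "irrefl I" "sym I"
  shows "(\<forall>c d. (c, d) \<notin> I \<longrightarrow> proj c d w = proj c d w') \<Longrightarrow> trace_eq I w w'"
proof (induction w arbitrary: w')
  case Nil
  show ?case
  proof (cases w')
    case Nil then show ?thesis by simp
  next
    case (Cons e r)
    have "(e, e) \<notin> I" using assms(1) by (simp add: irrefl_def)
    then have "proj e e [] = proj e e w'" using Nil.prems by blast
    then show ?thesis using Cons by simp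
  qed
next
  case (Cons c w1)
  have cc: "(c, c) \<notin> I" using assms(1) by (simp add: irrefl_def)
  then have "proj c c (c # w1) = proj c c w'" using Cons.prems by blast
  then have "c \<in> set (proj c c w')" by (metis list.set_intros(1) proj_simps(2))
  then have "c \<in> set w'" by (simp add: proj_def)
  then obtain y z where w': "w' = y @ c # z" and cy: "c \<notin> set y"
    by (meson split_list_first)
  have yI: "\<forall>e\<in>set y. (c, e) \<in> I"
  proof
    fix e assume ey: "e \<in> set y"
    show "(c, e) \<in> I"
    proof (rule ccontr)
      assume n: "(c, e) \<notin> I"
      then have "proj c e (c # w1) = proj c e w'" using Cons.prems by blast
      then have "c # proj c e w1 = proj c e y @ c # proj c e z" using w' by simp
      moreover have "proj c e y \<noteq> []" using ey by (auto simp: proj_def filter_empty_conv)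
      moreover have "c \<notin> set (proj c e y)" using cy by (simp add: proj_def)
      ultimately show False by (cases "proj c e y") auto
    qed
  qed
  have m: "trace_eq I w' (c # y @ z)" using move_front[OF assms(2) yI] w' by simp
  have "\<forall>c' d. (c', d) \<notin> I \<longrightarrow> proj c' d w1 = proj c' d (y @ z)"
  proof (intro allI impI)
    fix c' d assume h: "(c', d) \<notin> I"
    have "proj c' d (c # w1) = proj c' d (c # y @ z)"
      using Cons.prems h trace_eq_proj[OF assms(1,2) m h] by simp
    then show "proj c' d w1 = proj c' d (y @ z)" by (simp split: if_splits)
  qed
  then have "trace_eq I w1 (y @ z)" using Cons.IH by blast
  then have "trace_eq I (c # w1) (c # y @ z)" by (rule trace_eq_cons)
  then show ?case using m trace_eq_sym trace_eq_trans by blast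
qed

lemma takeWhile_nd: "d \<notin> set t \<Longrightarrow> takeWhile (\<lambda>e. e \<noteq> d) (t @ z) = t @ takeWhile (\<lambda>e. e \<noteq> d) z"
  by (induction t) auto

lemma len_key:
  assumes "y1 @ z1 = y2 @ z2" "count_list y1 d = count_list y2 d"
    "takeWhile (\<lambda>e. e \<noteq> d) z1 = takeWhile (\<lambda>e. e \<noteq> d) z2"
  shows "length y1 = length y2"
proof (rule ccontr)
  assume "length y1 \<noteq> length y2"
  then consider "length y1 < length y2" | "length y2 < length y1" by linarith
  then show False
  proof cases
    case 1
    obtain t where t: "y2 = y1 @ t" "z1 = t @ z2" using assms(1) 1
      by (metis append_eq_append_conv_if append_take_drop_id less_imp_le_nat)
    then have "t \<noteq> []" using 1 by auto
    have "count_list t d = 0" using assms(2) t by simp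
    then have "d \<notin> set t" by (simp add: count_list_0_iff)
    then have "takeWhile (\<lambda>e. e \<noteq> d) z1 = t @ takeWhile (\<lambda>e. e \<noteq> d) z2"
      using t by (simp add: takeWhile_nd)
    then show False using assms(3) \<open>t \<noteq> []\<close> by simp
  next
    case 2
    obtain t where t: "y1 = y2 @ t" "z2 = t @ z1" using assms(1) 2
      by (metis append_eq_append_conv_if append_take_drop_id less_imp_le_nat)
    then have "t \<noteq> []" using 2 by auto
    have "count_list t d = 0" using assms(2) t by simp
    then have "d \<notin> set t" by (simp add: count_list_0_iff)
    then have "takeWhile (\<lambda>e. e \<noteq> d) z2 = t @ takeWhile (\<lambda>e. e \<noteq> d) z1"
      using t by (simp add: takeWhile_nd)
    then show False using assms(3) \<open>t \<noteq> []\<close> by simp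
  qed
qed


theorem lemma1:
  fixes \<Sigma> :: "'a set" and I :: "('a \<times> 'a) set" and X :: "'s set"
    and act :: "'s \<Rightarrow> 'a \<Rightarrow> 's option" and a :: 'a and \<alpha> \<beta> \<gamma> :: 's
    and x :: "'a list" and p q :: nat
  assumes "concurrent_system \<Sigma> I X act"
    and "a \<in> \<Sigma>" and "\<alpha> \<in> X" and "\<beta> \<in> X"
    and "rooted_linking_exec \<Sigma> I act \<alpha> a x"
    and "run act \<alpha> x = Some \<gamma>"
  shows "\<forall>u u' v v'.
     (set u \<subseteq> \<Sigma> \<and> length u = p \<and> run act \<beta> u = Some \<alpha>) \<longrightarrow>
     (set u' \<subseteq> \<Sigma> \<and> length u' = p \<and> run act \<beta> u' = Some \<alpha>) \<longrightarrow>
     (set v \<subseteq> \<Sigma> - {a} \<and> length v = q \<and> run act \<gamma> v \<noteq> None) \<longrightarrow>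
     (set v' \<subseteq> \<Sigma> - {a} \<and> length v' = q \<and> run act \<gamma> v' \<noteq> None) \<longrightarrow>
     trace_eq I (u @ x @ v) (u' @ x @ v') \<longrightarrow>
     trace_eq I u u' \<and> trace_eq I v v'"
proof (intro allI impI)
  fix u u' v v'
  assume hu: "set u \<subseteq> \<Sigma> \<and> length u = p \<and> run act \<beta> u = Some \<alpha>"
    and hu': "set u' \<subseteq> \<Sigma> \<and> length u' = p \<and> run act \<beta> u' = Some \<alpha>"
    and hv: "set v \<subseteq> \<Sigma> - {a} \<and> length v = q \<and> run act \<gamma> v \<noteq> None"
    and hv': "set v' \<subseteq> \<Sigma> - {a} \<and> length v' = q \<and> run act \<gamma> v' \<noteq> None"
    and eq: "trace_eq I (u @ x @ v) (u' @ x @ v')"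
  have irr: "irrefl I" and sy: "sym I"
    using assms(1) by (auto simp: concurrent_system_def)
  obtain as js where xs: "set x \<subseteq> \<Sigma>" and xas: "trace_eq I x as"
    and L: "linking_seq_with \<Sigma> I act \<alpha> as js" and jsne: "js \<noteq> []" and ha: "as ! hd js = a"
    using assms(5) unfolding rooted_linking_exec_def rooted_linking_seq_def by blast
  have H: "proj c d u @ proj c d x @ proj c d v = proj c d u' @ proj c d x @ proj c d v'"
    if "(c, d) \<notin> I" for c d
    using trace_eq_proj[OF irr sy eq that] by simp
  have cnt_x: "count_list x e = count_list as e" for e
  proof -
    have "(e, e) \<notin> I" using irr by (simp add: irrefl_def)
    then have "proj e e x = proj e e as" using trace_eq_proj[OF irr sy xas] by blast
    then show ?thesis by (metis count_proj)
  qed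
  have ldep: "\<forall>k. Suc k < length js \<longrightarrow> (as ! (js ! k), as ! (js ! Suc k)) \<notin> I"
    using L unfolding linking_seq_with_def dep_def by blast
  have jslt: "\<forall>j\<in>set js. j < length as" using L unfolding linking_seq_with_def by blast
  have cover: "\<Sigma> \<subseteq> {as ! j | j. j \<in> set js}" using L unfolding linking_seq_with_def by blast
  have inx: "as ! (js ! k) \<in> set x" if "k < length js" for k
  proof -
    have "as ! (js ! k) \<in> set as" using jslt that by auto
    then have "count_list as (as ! (js ! k)) \<noteq> 0" by (simp add: count_list_0_iff)
    then show ?thesis using cnt_x by (metis count_list_0_iff)
  qed
  have chain: "k < length js \<Longrightarrow> count_list u (as ! (js ! k)) = count_list u' (as ! (js ! k))" for k
  proof (induction k)
    case 0
    have aa: "(a, a) \<notin> I" using irr by (simp add: irrefl_def)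
    have "a \<notin> set v" "a \<notin> set v'" using hv hv' by auto
    then have "proj a a v = []" "proj a a v' = []" by (auto simp: proj_def filter_empty_conv)
    then have "length (proj a a u @ proj a a x) = length (proj a a u' @ proj a a x)" using H[OF aa]
      by simp
    then have "length (proj a a u) = length (proj a a u')" by simp
    then have "count_list u a = count_list u' a" by (simp add: length_proj)
    moreover have "as ! (js ! 0) = a" using ha jsne by (simp add: hd_conv_nth)
    ultimately show ?case by simp
  next
    case (Suc k)
    define d where "d = as ! (js ! k)"
    define c where "c = as ! (js ! Suc k)"
    have IH: "count_list u d = count_list u' d" using Suc d_def by simp
    show ?case
    proof (cases "c = d")
      case True then show ?thesis using IH c_def by simp
    next
      case False
      have dc: "(d, c) \<notin> I" using ldep Suc d_def c_def by blast
      have dx: "d \<in> set (proj d c x)" using inx[of k] Suc d_def by (simp add: proj_def)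
      then obtain t1 t2 where t: "proj d c x = t1 @ d # t2" "d \<notin> set t1" by (meson split_list_first)
      have "length (proj d c u) = length (proj d c u')"
      proof (rule len_key[of _ "proj d c x @ proj d c v" _ "proj d c x @ proj d c v'" d])
        show "proj d c u @ proj d c x @ proj d c v = proj d c u' @ proj d c x @ proj d c v'"
          using H[OF dc] .
        show "count_list (proj d c u) d = count_list (proj d c u') d"
          using IH by (simp add: count_proj1)
        show "takeWhile (\<lambda>e. e \<noteq> d) (proj d c x @ proj d c v) = takeWhile (\<lambda>e. e \<noteq> d) (proj d c x @ proj d c v')"
          using t by (simp add: takeWhile_nd)
      qed
      then have "count_list u c = count_list u' c" using IH False by (simp add: length_proj)
      then show ?thesis using c_def by simp
    qed
  qed
  have cnt: "count_list u e = count_list u' e" for e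
  proof (cases "e \<in> \<Sigma>")
    case True
    then obtain j where "j \<in> set js" "e = as ! j" using cover by blast
    then obtain k where "k < length js" "e = as ! (js ! k)" by (metis in_set_conv_nth)
    then show ?thesis using chain by simp
  next
    case False
    then have "e \<notin> set u" "e \<notin> set u'" using hu hu' by auto
    then show ?thesis by simp
  qed
  have P: "proj c d u = proj c d u' \<and> proj c d v = proj c d v'" if "(c, d) \<notin> I" for c d
  proof -
    have "length (proj c d u) = length (proj c d u')" using cnt by (simp add: length_proj)
    then show ?thesis using H[OF that] by (simp add: append_eq_append_conv)
  qed
  show "trace_eq I u u' \<and> trace_eq I v v'"
    using proj_eq_trace[OF irr sy] P by blast
qed
end
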